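(* Let $r,i\in\mathbb{Z}$ and $\beta\in\Bbbk^*$. Then for all $0\le l\le k$, $$c_\beta^{r,i}(k,l)=\lambda_\beta^i(k,l)\,y^{k-l}x^rg^{i-k}.$$
   Context: $\Bbbk$ is an algebraically closed field of characteristic $0$; $n,w$ positive integers, $\gamma$ a primitive $n$-th root of unity. $H=B(n,w,\gamma)$ is the Hopf algebra generated by $x^{\pm1},g,y$ with relations $xx^{-1}=x^{-1}x=1$, $xg=gx$, $xy=yx$, $yg=\gamma gy$, $y^n=1-x^w=1-g^n$, with $\Delta(x)=x\otimes x$, $\Delta(g)=g\otimes g$, $\Delta(y)=y\otimes g+1\otimes y$, $\varepsilon(x)=\varepsilon(g)=1$, $\varepsilon(y)=0$, $S(x)=x^{-1}$, $S(g)=g^{-1}$, $S(y)=-yg^{-1}$. The elements $c_\beta^{r,i}(k,l)\in H$ ($0\le l\le k$) are defined by $c_\beta^{r,i}(0,0)=x^rg^i$ and, for $k\ge0$: $c_\beta^{r,i}(k+1,0)=c_\beta^{r,i}(k,0)S(y)+\beta yc_\beta^{r,i}(k,0)S(g)$; for $0<l<k+1$, $c_\beta^{r,i}(k+1,l)=c_\beta^{r,i}(k,l)S(y)+\beta\gamma^{-l}yc_\beta^{r,i}(k,l)S(g)+c_\beta^{r,i}(k,l-1)S(g)$; $c_\beta^{r,i}(k+1,k+1)=c_\beta^{r,i}(k,k)S(g)$. The scalars: $R_\beta^i(k,l)=\beta\gamma^{-l}-\gamma^{k-1-i}$ for $0\le l<k$ and $R_\beta^i(k,k)=1$; $\lambda_\beta^i(0,0)=1$,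 and for $k\ge1$: $\lambda_\beta^i(k,0)=R_\beta^i(k,0)\lambda_\beta^i(k-1,0)$, $\lambda_\beta^i(k,l)=R_\beta^i(k,l)\lambda_\beta^i(k-1,l)+\lambda_\beta^i(k-1,l-1)$ for $0<l<k$, $\lambda_\beta^i(k,k)=1$. *)

theory Defs
  imports "HOL-Computational_Algebra.Polynomial"
begin

definition alg_closed :: "'k::field itself \<Rightarrow> bool" where
  "alg_closed _ \<longleftrightarrow> (\<forall>p::'k poly. degree p > 0 \<longrightarrow> (\<exists>z. poly p z = 0))"

text \<open>Integer powers of an invertible element z with given inverse zi.\<close>
definition zpow :: "'a::ring_1 \<Rightarrow> 'a \<Rightarrow> int \<Rightarrow> 'a" where
  "zpow z zi m = (if 0 \<le> m then z ^ nat m else zi ^ nat (- m))"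

text \<open>A (unital, associative) \<open>\<Bbbk>\<close>-algebra A is a ring with a ring homomorphism
  phi from \<open>\<Bbbk>\<close> into the centre of A; scalar multiplication is  phi c * a.\<close>
definition kalg_struct :: "('k::field \<Rightarrow> 'a::ring_1) \<Rightarrow> bool" where
  "kalg_struct phi \<longleftrightarrow> phi 1 = 1 \<and> (\<forall>a b. phi (a + b) = phi a + phi b)
     \<and> (\<forall>a b. phi (a * b) = phi a * phi b) \<and> (\<forall>a z. phi a * z = z * phi a)"

text \<open>Elements x, xi = x^{-1}, g, gi = g^{-1}, y of a \<open>\<Bbbk>\<close>-algebra satisfying the defining
  relations of B(n,w,\<gamma>).  (Since g^n = x^w with x invertible, g is invertible in
  B(n,w,\<gamma>); gi denotes its inverse, which is S(g).)  Any statement of the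
  form "an identity holds for these elements for every such tuple in every
  \<open>\<Bbbk>\<close>-algebra" is equivalent to the identity in B(n,w,\<gamma>) itself, by the universal
  property of the presentation.\<close>
definition B_rels :: "('k::field \<Rightarrow> 'a::ring_1) \<Rightarrow> nat \<Rightarrow> nat \<Rightarrow> 'k \<Rightarrow>
    'a \<Rightarrow> 'a \<Rightarrow> 'a \<Rightarrow> 'a \<Rightarrow> 'a \<Rightarrow> bool" where
  "B_rels phi n w \<gamma> x xi g gi y \<longleftrightarrow>
     kalg_struct phi \<and>
     x * xi = 1 \<and> xi * x = 1 \<and> g * gi = 1 \<and> gi * g = 1 \<and>
     x * g = g * x \<and> x * y = y * x \<and> y * g = phi \<gamma> * (g * y) \<and>
     y ^ n = 1 - x ^ w \<and> y ^ n = 1 - g ^ n"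

text \<open>The elements c_\<beta>^{r,i}(k,l), with base = x^r g^i, S(y) = - y gi, S(g) = gi.
  Values for l > k are irrelevant (set to 0).\<close>
fun cfun :: "('k::field \<Rightarrow> 'a::ring_1) \<Rightarrow> 'k \<Rightarrow> 'k \<Rightarrow> 'a \<Rightarrow> 'a \<Rightarrow> 'a \<Rightarrow> nat \<Rightarrow> nat \<Rightarrow> 'a" where
  "cfun phi \<gamma> \<beta> gi y base 0 l = (if l = 0 then base else 0)"
| "cfun phi \<gamma> \<beta> gi y base (Suc k) l =
     (if l = 0 then cfun phi \<gamma> \<beta> gi y base k 0 * (- (y * gi))
                    + phi \<beta> * y * cfun phi \<gamma> \<beta> gi y base k 0 * gi
      else if l < Suc k then cfun phi \<gamma> \<beta> gi y base k l * (- (y * gi))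
                    + phi (\<beta> * inverse \<gamma> ^ l) * y * cfun phi \<gamma> \<beta> gi y base k l * gi
                    + cfun phi \<gamma> \<beta> gi y base k (l - 1) * gi
      else if l = Suc k then cfun phi \<gamma> \<beta> gi y base k k * gi
      else 0)"

definition Rsc :: "'k::field \<Rightarrow> 'k \<Rightarrow> int \<Rightarrow> nat \<Rightarrow> nat \<Rightarrow> 'k" where
  "Rsc \<gamma> \<beta> i k l = (if l < k then \<beta> * power_int \<gamma> (- int l) - power_int \<gamma> (int k - 1 - i)
                    else if l = k then 1 else 0)"

text \<open>\<lambda>_\<beta>^i(k,l); values for l > k irrelevant (set to 0).\<close>
fun lam :: "'k::field \<Rightarrow> 'k \<Rightarrow> int \<Rightarrow> nat \<Rightarrow> nat \<Rightarrow> 'k" where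
  "lam \<gamma> \<beta> i 0 l = (if l = 0 then 1 else 0)"
| "lam \<gamma> \<beta> i (Suc k) l =
     (if l = 0 then Rsc \<gamma> \<beta> i (Suc k) 0 * lam \<gamma> \<beta> i k 0
      else if l < Suc k then Rsc \<gamma> \<beta> i (Suc k) l * lam \<gamma> \<beta> i k l + lam \<gamma> \<beta> i k (l - 1)
      else if l = Suc k then 1 else 0)"

end

theory Submission
  imports Defs
begin

lemma lamS: fixes \<gamma> \<beta> :: "'k::field" assumes "0 < l" "l < Suc k"
  shows "lam \<gamma> \<beta> i (Suc k) l = (\<beta> * power_int \<gamma> (- int l) - power_int \<gamma> (int k - i)) * lam \<gamma> \<beta> i k l + lam \<gamma> \<beta> i k (l - 1)"
proof -
  have "int (Suc k) - 1 - i = int k - i" by simp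
  then show ?thesis using assms by (simp add: Rsc_def)
qed
lemma lam0: fixes \<gamma> \<beta> :: "'k::field"
  shows "lam \<gamma> \<beta> i (Suc k) 0 = (\<beta> - power_int \<gamma> (int k - i)) * lam \<gamma> \<beta> i k 0"
proof -
  have "int (Suc k) - 1 - i = int k - i" by simp
  then show ?thesis by (simp add: Rsc_def)
qed

locale bctx =
  fixes phi :: "'k::field \<Rightarrow> 'a::ring_1" and \<gamma> :: 'k and X g gi y :: 'a
  assumes hom: "kalg_struct phi" and gnz: "\<gamma> \<noteq> 0"
    and ggi: "g * gi = 1" "gi * g = 1" and Xy: "X * y = y * X"
    and yg: "y * g = phi \<gamma> * (g * y)"
begin

lemma phi1: "phi 1 = 1" using hom unfolding kalg_struct_def by blast
lemma phi_add: "phi (a + b) = phi a + phi b" using hom unfolding kalg_struct_def by blast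
lemma phi_mult: "phi (a * b) = phi a * phi b" using hom unfolding kalg_struct_def by blast
lemma central: "phi a * z = z * phi a" using hom unfolding kalg_struct_def by blast
lemma phi0: "phi 0 = 0" using phi_add[of 0 0] by simp
lemma phi_minus: "phi (- a) = - phi a"
proof -
  have "phi a + phi (- a) = 0" using phi_add[of a "-a"] phi0 by simp
  then show ?thesis by (simp add: eq_neg_iff_add_eq_0 add.commute)
qed

lemma comm: "z * (phi c * w) = phi c * (z * w)"
proof -
  have "z * (phi c * w) = (z * phi c) * w" by (simp only: mult.assoc)
  also have "\<dots> = (phi c * z) * w" by (simp only: central[of c z])
  finally show ?thesis by (simp only: mult.assoc)
qed

lemma gy: "g * y = phi (inverse \<gamma>) * (y * g)"
proof -
  have "phi (inverse \<gamma>) * (y * g) = phi (inverse \<gamma>) * phi \<gamma> * (g * y)"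
    by (simp add: yg mult.assoc)
  also have "\<dots> = g * y" proof -
    have "inverse \<gamma> * \<gamma> = 1" using gnz by simp
    then show ?thesis by (simp only: phi_mult[symmetric] phi1 mult_1_left)
  qed
  finally show ?thesis by simp
qed

lemma giy: "gi * y = phi \<gamma> * (y * gi)"
proof -
  have "gi * (y * g) * gi = gi * y" using ggi by (simp add: mult.assoc)
  moreover have "gi * (y * g) * gi = phi \<gamma> * (y * gi)"
  proof -
    have "gi * (y * g) * gi = gi * phi \<gamma> * (g * y) * gi" by (simp add: yg mult.assoc)
    also have "\<dots> = phi \<gamma> * ((gi * g) * y * gi)" by (simp only: central[of \<gamma> gi, symmetric] mult.assoc)
    finally show ?thesis by (simp add: ggi mult.assoc)
  qed
  ultimately show ?thesis by simp
qed

definition G :: "int \<Rightarrow> 'a" where "G m = zpow g gi m"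

lemma gpow_y: "g ^ j * y = phi (inverse \<gamma> ^ j) * (y * g ^ j)"
proof (induction j)
  case 0 then show ?case by (simp add: phi1)
next
  case (Suc j)
  have "g ^ Suc j * y = g * (g ^ j * y)" by (simp add: mult.assoc)
  also have "\<dots> = g * (phi (inverse \<gamma> ^ j) * (y * g ^ j))" using Suc by simp
  also have "\<dots> = phi (inverse \<gamma> ^ j) * ((g * y) * g ^ j)"
    by (simp only: comm mult.assoc)
  also have "\<dots> = phi (inverse \<gamma> ^ j) * phi (inverse \<gamma>) * (y * g ^ Suc j)"
    by (simp add: gy mult.assoc power_Suc)
  finally show ?case by (simp only: power_Suc2 phi_mult)
qed

lemma gipow_y: "gi ^ j * y = phi (\<gamma> ^ j) * (y * gi ^ j)"
proof (induction j)
  case 0 then show ?case by (simp add: phi1)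
next
  case (Suc j)
  have "gi ^ Suc j * y = gi * (gi ^ j * y)" by (simp add: mult.assoc)
  also have "\<dots> = gi * (phi (\<gamma> ^ j) * (y * gi ^ j))" using Suc by simp
  also have "\<dots> = phi (\<gamma> ^ j) * ((gi * y) * gi ^ j)"
    by (simp only: comm mult.assoc)
  also have "\<dots> = phi (\<gamma> ^ j) * phi \<gamma> * (y * gi ^ Suc j)"
    by (simp add: giy mult.assoc power_Suc)
  finally show ?case by (simp only: power_Suc2 phi_mult)
qed

lemma G_y: "G m * y = phi (power_int \<gamma> (- m)) * (y * G m)"
proof (cases "0 \<le> m")
  case True
  have "power_int \<gamma> (-m) = inverse \<gamma> ^ nat m" using True
    by (cases "m = 0") (auto simp: power_int_def)
  then show ?thesis using gpow_y[of "nat m"] True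
    by (simp add: G_def zpow_def)
next
  case False
  have "power_int \<gamma> (-m) = \<gamma> ^ nat (-m)" using False
    by (auto simp: power_int_def)
  then show ?thesis using gipow_y[of "nat (-m)"] False
    by (simp add: G_def zpow_def)
qed

lemma G_gi: "G m * gi = G (m - 1)"
proof (cases "1 \<le> m")
  case True
  define j where "j = nat m - 1"
  have j: "nat m = Suc j" using True by (simp add: j_def)
  have "g ^ Suc j * gi = g ^ j" using ggi by (simp only: power_Suc2 mult.assoc mult_1_right)
  moreover have "nat (m - 1) = j" using j by simp
  ultimately show ?thesis using True j by (simp add: G_def zpow_def)
next
  case False
  then have "nat (-(m-1)) = Suc (nat (-m))" by simp
  then show ?thesis using False by (simp add: G_def zpow_def power_Suc2 power_commutes)
qed

lemma t1: "(phi a * y ^ p * X * G m) * (- (y * gi))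
   = phi (- a * power_int \<gamma> (- m)) * y ^ Suc p * X * G (m - 1)"
proof -
  have "(phi a * y ^ p * X * G m) * (- (y * gi)) = - (phi a * y ^ p * X * (G m * y) * gi)"
    by (simp add: mult.assoc)
  also have "\<dots> = - (phi a * y ^ p * X * (phi (power_int \<gamma> (- m)) * (y * G m)) * gi)"
    by (simp add: G_y)
  also have "\<dots> = - (phi a * ((y ^ p * X) * (phi (power_int \<gamma> (- m)) * (y * G m))) * gi)"
    by (simp only: mult.assoc)
  also have "\<dots> = - (phi a * (phi (power_int \<gamma> (- m)) * ((y ^ p * X) * (y * G m))) * gi)"
    by (simp only: comm[of "y ^ p * X"])
  also have "\<dots> = - (phi a * phi (power_int \<gamma> (- m)) * y ^ p * (X * y) * (G m * gi))"
    by (simp only: mult.assoc)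
  also have "\<dots> = - (phi a * phi (power_int \<gamma> (- m)) * y ^ Suc p * X * G (m - 1))"
    by (simp add: Xy G_gi mult.assoc[symmetric] power_Suc2 del: power_Suc)
  finally show ?thesis by (simp add: phi_mult phi_minus)
qed

lemma t2: "phi b * y * (phi a * y ^ p * X * G m) * gi
   = phi (b * a) * y ^ Suc p * X * G (m - 1)"
proof -
  have "phi b * y * (phi a * y ^ p * X * G m) * gi = phi b * (y * phi a) * y ^ p * X * (G m * gi)"
    by (simp add: mult.assoc)
  also have "\<dots> = phi b * phi a * (y * y ^ p) * X * G (m - 1)"
    by (simp add: G_gi central[of a y, symmetric] mult.assoc)
  finally show ?thesis by (simp add: phi_mult)
qed

lemma t3: "(phi a * y ^ p * X * G m) * gi = phi a * y ^ p * X * G (m - 1)"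
  by (simp add: mult.assoc G_gi)

lemma comb: "phi a * y ^ p * X * G m + phi b * y ^ p * X * G m = phi (a + b) * y ^ p * X * G m"
  by (simp add: phi_add distrib_right)

lemma lam_diag: "lam \<gamma> \<beta> i k k = 1"
  by (cases k) auto

lemma main:
  "l \<le> k \<Longrightarrow> cfun phi \<gamma> \<beta> gi y (X * G i) k l
         = phi (lam \<gamma> \<beta> i k l) * y ^ (k - l) * X * G (i - int k)"
proof (induction k arbitrary: l)
  case 0 then show ?case by (simp add: phi1)
next
  case (Suc k)
  have e: "G (i - int (Suc k)) = G ((i - int k) - 1)" by (simp add: algebra_simps)
  have pw: "power_int \<gamma> (- (i - int k)) = power_int \<gamma> (int (Suc k) - 1 - i)" by simp
  consider "l = 0" | "0 < l \<and> l < Suc k" | "l = Suc k" using Suc.prems by linarith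
  then show ?case
  proof cases
    case 1
    let ?c = "cfun phi \<gamma> \<beta> gi y (X * G i) k 0"
    have "cfun phi \<gamma> \<beta> gi y (X * G i) (Suc k) l = ?c * (- (y * gi)) + phi \<beta> * y * ?c * gi"
      using 1 by simp
    also have "\<dots> = phi (- lam \<gamma> \<beta> i k 0 * power_int \<gamma> (- (i - int k))) * y ^ Suc k * X * G (i - int k - 1)
        + phi (\<beta> * lam \<gamma> \<beta> i k 0) * y ^ Suc k * X * G (i - int k - 1)"
      using Suc.IH[of 0] by (simp only: t1 t2 diff_zero le0)
    also have "\<dots> = phi (- lam \<gamma> \<beta> i k 0 * power_int \<gamma> (- (i - int k)) + \<beta> * lam \<gamma> \<beta> i k 0) * y ^ Suc k * X * G (i - int k - 1)"
      by (rule comb)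
    also have "- lam \<gamma> \<beta> i k 0 * power_int \<gamma> (- (i - int k)) + \<beta> * lam \<gamma> \<beta> i k 0 = lam \<gamma> \<beta> i (Suc k) l"
      by (simp only: 1 lam0) (simp add: algebra_simps)
    finally show ?thesis using 1 e by simp
  next
    case 2
    have lk: "l \<le> k" and l1: "l - 1 \<le> k" using 2 by auto
    have sk: "Suc k - l = Suc (k - l)" "k - (l - 1) = Suc (k - l)" using 2 by auto
    have iv: "inverse \<gamma> ^ l = power_int \<gamma> (- int l)" by (simp add: power_int_def power_inverse)
    let ?c = "cfun phi \<gamma> \<beta> gi y (X * G i) k l"
    let ?d = "cfun phi \<gamma> \<beta> gi y (X * G i) k (l - 1)"
    have "cfun phi \<gamma> \<beta> gi y (X * G i) (Suc k) l = ?c * (- (y * gi)) + phi (\<beta> * inverse \<gamma> ^ l) * y * ?c * gi + ?d * gi"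
      using 2 by simp
    also have "\<dots> = phi (- lam \<gamma> \<beta> i k l * power_int \<gamma> (- (i - int k))) * y ^ Suc (k - l) * X * G (i - int k - 1)
        + phi ((\<beta> * inverse \<gamma> ^ l) * lam \<gamma> \<beta> i k l) * y ^ Suc (k - l) * X * G (i - int k - 1) + phi (lam \<gamma> \<beta> i k (l - 1)) * y ^ Suc (k - l) * X * G (i - int k - 1)"
      by (simp only: Suc.IH[OF lk] Suc.IH[OF l1] sk t1 t2 t3)
    also have "\<dots> = phi ((- lam \<gamma> \<beta> i k l * power_int \<gamma> (- (i - int k))) + ((\<beta> * inverse \<gamma> ^ l) * lam \<gamma> \<beta> i k l) + (lam \<gamma> \<beta> i k (l - 1))) * y ^ Suc (k - l) * X * G (i - int k - 1)"
      by (simp only: comb)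
    also have "(- lam \<gamma> \<beta> i k l * power_int \<gamma> (- (i - int k))) + ((\<beta> * inverse \<gamma> ^ l) * lam \<gamma> \<beta> i k l) + (lam \<gamma> \<beta> i k (l - 1)) = lam \<gamma> \<beta> i (Suc k) l"
      using 2 by (simp only: lamS[of l k] iv[symmetric] simp_thms) (simp add: algebra_simps)
    finally show ?thesis using e sk by simp
  next
    case 3
    then show ?thesis using Suc.IH[of k] e by (simp add: phi1 lam_diag mult.assoc G_gi)
  qed
qed

end

theorem proposition3p11:
  fixes phi :: "'k::field_char_0 \<Rightarrow> 'a::ring_1"
    and n w :: nat and \<gamma> \<beta> :: 'k and x xi g gi y :: 'a and r i :: int and k l :: nat
  assumes "alg_closed TYPE('k)"
    and "n > 0" and "w > 0"
    and "\<gamma> ^ n = 1" and "\<forall>m. 0 < m \<and> m < n \<longrightarrow> \<gamma> ^ m \<noteq> 1"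
    and "B_rels phi n w \<gamma> x xi g gi y"
    and "\<beta> \<noteq> 0"
    and "l \<le> k"
  shows "cfun phi \<gamma> \<beta> gi y (zpow x xi r * zpow g gi i) k l
         = phi (lam \<gamma> \<beta> i k l) * y ^ (k - l) * zpow x xi r * zpow g gi (i - int k)"
proof -
  have B: "kalg_struct phi" "x * xi = 1" "xi * x = 1" "g * gi = 1" "gi * g = 1"
    "x * y = y * x" "y * g = phi \<gamma> * (g * y)"
    using assms(6) by (auto simp: B_rels_def)
  have gnz: "\<gamma> \<noteq> 0" using assms(2,4) by (cases "\<gamma> = 0") (simp_all add: power_0_left)
  have xiy: "xi * y = y * xi"
  proof -
    have "xi * y = xi * (y * x) * xi" by (simp add: mult.assoc B(2))
    also have "\<dots> = xi * (x * y) * xi" by (simp only: B(6))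
    also have "\<dots> = y * xi" by (simp only: mult.assoc[symmetric] B(3) mult_1_left)
    finally show ?thesis .
  qed
  have Xy: "zpow x xi r * y = y * zpow x xi r"
  proof -
    have "\<And>j. x ^ j * y = y * x ^ j" "\<And>j. xi ^ j * y = y * xi ^ j"
       apply (rule power_commuting_commutes, rule B(6))
      by (rule power_commuting_commutes, rule xiy)
    then show ?thesis by (simp add: zpow_def)
  qed
  interpret bctx phi \<gamma> "zpow x xi r" g gi y
    using B gnz Xy by unfold_locales auto
  show ?thesis using main[OF assms(8), of \<beta> i] by (simp add: G_def)
qed

end
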